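(* Let $0<\mu_n<\infty$ and $t\in\mathbb R$. Then for each fixed sample size $n$, every estimator $\hat G_n(t)$ of $G_{A,n,\theta}(t)$ satisfies $$\sup_{|\theta|<c\mu_n}P_{n,\theta}\big(|\hat G_n(t)-G_{A,n,\theta}(t)|>\varepsilon\big)\ge\tfrac12$$ for each $\varepsilon<(\Phi(n^{1/2}\mu_n(t+1))-\Phi(n^{1/2}\mu_n(t-1)))/2$ and each $c>|t|$. Consequently, if $\mu_n\to0$ and $n^{1/2}\mu_n\to\infty$, then for each $c>|t|$, $$\liminf_{n\to\infty}\inf_{\hat G_n(t)}\sup_{|\theta|<c\mu_n}P_{n,\theta}\big(|\hat G_n(t)-G_{A,n,\theta}(t)|>\varepsilon\big)\ge\tfrac12$$ for each $\varepsilon<1/2$ if $|t|<1$, and for each $\varepsilon<1/4$ if $|t|=1$, where the infimum is over all estimators $\hat G_n(t)$.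
   Context: Gaussian location model: for each sample size $n$, $y_1,\dots,y_n$ are i.i.d. $N(\theta,1)$ with $\theta\in\mathbb R$ unknown; $\bar y$ is their mean. $P_{n,\theta}$ denotes the probability governing a sample of size $n$ when $\theta$ is the true parameter. Given a nonrandom tuning parameter $\mu_n>0$, the adaptive LASSO estimator is $\hat\theta_A=0$ if $|\bar y|\le\mu_n$ and $\hat\theta_A=\bar y-\mu_n^2/\bar y$ if $|\bar y|>\mu_n$. $G_{A,n,\theta}$ denotes the cdf of $\mu_n^{-1}(\hat\theta_A-\theta)$ under $P_{n,\theta}$. An estimator $\hat G_n(t)$ is any (possibly randomized) measurable function of the data $y_1,\dots,y_n$ (and of an independent randomization). $\Phi$ is the standard normal cdf. *)

theory Defs
  imports "HOL-Probability.Probability"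
begin

definition Phi :: "real \<Rightarrow> real" where
  "Phi x = measure (density lborel std_normal_density) {..x}"

text \<open>Law of a sample y_0,...,y_(n-1) i.i.d. N(theta,1) (data vectors are functions nat => real,
  extensional outside {..<n}).\<close>
definition sample :: "nat \<Rightarrow> real \<Rightarrow> (nat \<Rightarrow> real) measure" where
  "sample n \<theta> = PiM {..<n} (\<lambda>_. density lborel (normal_density \<theta> 1))"

definition ybar :: "nat \<Rightarrow> (nat \<Rightarrow> real) \<Rightarrow> real" where
  "ybar n y = (\<Sum>i<n. y i) / real n"

definition alasso :: "real \<Rightarrow> real \<Rightarrow> real" where
  "alasso \<mu> yb = (if \<bar>yb\<bar> \<le> \<mu> then 0 else yb - \<mu>\<^sup>2 / yb)"

definition G_A :: "nat \<Rightarrow> real \<Rightarrow> real \<Rightarrow> real \<Rightarrow> real" where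
  "G_A n \<mu> \<theta> t = measure (sample n \<theta>)
     {y \<in> space (sample n \<theta>). (alasso \<mu> (ybar n y) - \<theta>) / \<mu> \<le> t}"

text \<open>A (possibly randomized) estimator for sample size n: a measurable real function of the
  data and of an independent randomization with law R.\<close>
definition estimator :: "nat \<Rightarrow> 'r measure \<Rightarrow> ((nat \<Rightarrow> real) \<times> 'r \<Rightarrow> real) \<Rightarrow> bool" where
  "estimator n R Gh \<longleftrightarrow> prob_space R \<and>
     Gh \<in> borel_measurable (PiM {..<n} (\<lambda>_. borel) \<Otimes>\<^sub>M R)"

definition risk :: "nat \<Rightarrow> real \<Rightarrow> real \<Rightarrow> real \<Rightarrow> 'r measure \<Rightarrow> ((nat \<Rightarrow> real) \<times> 'r \<Rightarrow> real)
     \<Rightarrow> real \<Rightarrow> real" where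
  "risk n \<mu> \<theta> t R Gh \<epsilon> = measure (sample n \<theta> \<Otimes>\<^sub>M R)
     {\<omega> \<in> space (sample n \<theta> \<Otimes>\<^sub>M R). \<bar>Gh \<omega> - G_A n \<mu> \<theta> t\<bar> > \<epsilon>}"

definition maxrisk :: "nat \<Rightarrow> real \<Rightarrow> real \<Rightarrow> real \<Rightarrow> 'r measure \<Rightarrow> ((nat \<Rightarrow> real) \<times> 'r \<Rightarrow> real)
     \<Rightarrow> real \<Rightarrow> real" where
  "maxrisk n \<mu> c t R Gh \<epsilon> = (SUP \<theta> \<in> {\<theta>. \<bar>\<theta>\<bar> < c * \<mu>}. risk n \<mu> \<theta> t R Gh \<epsilon>)"

end

theory Submission imports Defs begin

lemma sample_density:
  "sample n \<theta> = density (PiM {..<n} (\<lambda>_. lborel)) (\<lambda>y. \<Prod>i<n. ennreal (normal_density \<theta> 1 (y i)))"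
proof -
  let ?N = "density lborel (normal_density \<theta> 1)"
  interpret N: product_prob_space "\<lambda>_. ?N" "{..<n}"
    by (rule product_prob_spaceI, rule prob_space_normal_density, simp)
  interpret L: product_sigma_finite "\<lambda>_::nat. lborel"
    by standard
  have "density (PiM {..<n} (\<lambda>_. lborel)) (\<lambda>y. \<Prod>i<n. ennreal (normal_density \<theta> 1 (y i))) = PiM {..<n} (\<lambda>_. ?N)"
  proof (rule N.PiM_eqI)
    show "sets (density (PiM {..<n} (\<lambda>_. lborel)) (\<lambda>y. \<Prod>i<n. ennreal (normal_density \<theta> 1 (y i)))) = sets (PiM {..<n} (\<lambda>_. ?N))"
      unfolding sets_density by (rule sets_PiM_cong) auto
  next
    fix A assume A: "\<And>i. i \<in> {..<n} \<Longrightarrow> A i \<in> sets ?N"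
    have "emeasure (density (PiM {..<n} (\<lambda>_. lborel)) (\<lambda>y. \<Prod>i<n. ennreal (normal_density \<theta> 1 (y i)))) (PiE {..<n} A)
       = (\<integral>\<^sup>+ y. (\<Prod>i<n. ennreal (normal_density \<theta> 1 (y i))) * indicator (PiE {..<n} A) y \<partial>PiM {..<n} (\<lambda>_. lborel))"
      using A by (intro emeasure_density) (auto intro!: sets_PiM_I_finite)
    also have "\<dots> = (\<integral>\<^sup>+ y. (\<Prod>i<n. ennreal (normal_density \<theta> 1 (y i)) * indicator (A i) (y i)) \<partial>PiM {..<n} (\<lambda>_. lborel))"
      by (intro nn_integral_cong) (auto simp: space_PiM indicator_def prod.distrib PiE_iff split: if_splits)
    also have "\<dots> = (\<Prod>i<n. \<integral>\<^sup>+ x. ennreal (normal_density \<theta> 1 x) * indicator (A i) x \<partial>lborel)"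
      using A by (intro L.product_nn_integral_prod) auto
    also have "\<dots> = (\<Prod>i<n. emeasure ?N (A i))"
      using A by (intro prod.cong refl) (simp add: emeasure_density)
    finally show "emeasure (density (PiM {..<n} (\<lambda>_. lborel)) (\<lambda>y. \<Prod>i<n. ennreal (normal_density \<theta> 1 (y i)))) (PiE {..<n} A) = (\<Prod>i<n. emeasure ?N (A i))" .
  qed simp
  then show ?thesis unfolding sample_def by simp
qed


lemma sample_pair_density:
  assumes R: "prob_space R"
  shows "sample n \<theta> \<Otimes>\<^sub>M R = density (PiM {..<n} (\<lambda>_. lborel) \<Otimes>\<^sub>M R)
            (\<lambda>\<omega>. ennreal (\<Prod>i<n. normal_density \<theta> 1 (fst \<omega> i)))"
proof -
  interpret R: prob_space R by fact
  have "sample n \<theta> \<Otimes>\<^sub>M R = density (PiM {..<n} (\<lambda>_. lborel)) (\<lambda>y. \<Prod>i<n. ennreal (normal_density \<theta> 1 (y i))) \<Otimes>\<^sub>M density R (\<lambda>_. 1)"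
    by (simp add: sample_density density_1)
  also have "\<dots> = density (PiM {..<n} (\<lambda>_. lborel) \<Otimes>\<^sub>M R) (\<lambda>(x,y). (\<Prod>i<n. ennreal (normal_density \<theta> 1 (x i))) * 1)"
    by (rule pair_measure_density) (auto simp: density_1 R.sigma_finite_measure_axioms)
  also have "\<dots> = density (PiM {..<n} (\<lambda>_. lborel) \<Otimes>\<^sub>M R) (\<lambda>\<omega>. ennreal (\<Prod>i<n. normal_density \<theta> 1 (fst \<omega> i)))"
    by (intro density_cong) (auto simp: prod_ennreal)
  finally show ?thesis .
qed

lemma sets_sample_R: "sets (sample n \<theta> \<Otimes>\<^sub>M R) = sets (PiM {..<n} (\<lambda>_. borel) \<Otimes>\<^sub>M R)"
  unfolding sample_def by (intro sets_pair_measure_cong sets_PiM_cong) auto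

lemma sets_lborel_R: "sets (PiM {..<n} (\<lambda>_. lborel) \<Otimes>\<^sub>M R) = sets (PiM {..<n} (\<lambda>_. borel) \<Otimes>\<^sub>M R)"
  by (intro sets_pair_measure_cong sets_PiM_cong) auto

lemma sample_R_lsc:
  assumes R: "prob_space R" and E: "E \<in> sets (PiM {..<n} (\<lambda>_. borel) \<Otimes>\<^sub>M R)"
    and th: "\<theta>k \<longlonglongrightarrow> \<theta>0"
  shows "emeasure (sample n \<theta>0 \<Otimes>\<^sub>M R) E \<le> liminf (\<lambda>k. emeasure (sample n (\<theta>k k) \<Otimes>\<^sub>M R) E)"
proof -
  let ?L = "PiM {..<n} (\<lambda>_. lborel) \<Otimes>\<^sub>M R"
  let ?u = "\<lambda>\<theta> \<omega>. ennreal ((\<Prod>i<n. normal_density \<theta> 1 (fst \<omega> i)) * indicator E \<omega>)"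
  have EL: "E \<in> sets ?L" using E sets_lborel_R by blast
  have em: "emeasure (sample n \<theta> \<Otimes>\<^sub>M R) E = integral\<^sup>N ?L (?u \<theta>)" for \<theta>
    unfolding sample_pair_density[OF R]
    by (subst emeasure_density[OF _ EL]) (auto intro!: nn_integral_cong simp: ennreal_mult' indicator_def)
  have meas: "?u \<theta> \<in> borel_measurable ?L" for \<theta>
    using EL by measurable
  have lim: "liminf (\<lambda>k. ?u (\<theta>k k) \<omega>) = ?u \<theta>0 \<omega>" for \<omega>
  proof (rule lim_imp_Liminf)
    show "(\<lambda>k. ?u (\<theta>k k) \<omega>) \<longlonglongrightarrow> ?u \<theta>0 \<omega>"
      unfolding normal_density_def
      by (intro tendsto_ennrealI tendsto_intros th) auto
  qed simp
  have "emeasure (sample n \<theta>0 \<Otimes>\<^sub>M R) E = (\<integral>\<^sup>+ \<omega>. liminf (\<lambda>k. ?u (\<theta>k k) \<omega>) \<partial>?L)"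
    by (simp add: em lim)
  also have "\<dots> \<le> liminf (\<lambda>k. integral\<^sup>N ?L (?u (\<theta>k k)))"
    by (rule nn_integral_liminf) (rule meas)
  finally show ?thesis by (simp add: em)
qed


lemma prob_space_N: "prob_space (density lborel (normal_density \<theta> 1))"
  by (rule prob_space_normal_density) simp

lemma prob_space_sample: "prob_space (sample n \<theta>)"
  unfolding sample_def by (rule prob_space_PiM) (rule prob_space_N)

lemma ybar_distributed:
  assumes n: "0 < n"
  shows "distributed (sample n \<theta>) lborel (ybar n) (normal_density \<theta> (1 / sqrt (real n)))"
proof -
  let ?N = "density lborel (normal_density \<theta> 1)"
  let ?M = "sample n \<theta>"
  interpret M: prob_space ?M by (rule prob_space_sample)
  have rv: "\<And>i. i \<in> {..<n} \<Longrightarrow> (\<lambda>y. y i) \<in> measurable ?M borel"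
    unfolding sample_def by measurable
  have comp: "distr ?M ?N (\<lambda>y. y i) = ?N" if "i < n" for i
    unfolding sample_def using that by (intro distr_PiM_component prob_space_N) auto
  have "distr ?M (PiM {..<n} (\<lambda>_. borel)) (\<lambda>x. \<lambda>i\<in>{..<n}. x i) = distr ?M (PiM {..<n} (\<lambda>_. borel)) (\<lambda>x. x)"
    by (intro distr_cong) (auto simp: sample_def space_PiM PiE_def extensional_restrict)
  also have "\<dots> = ?M"
    by (rule distr_id2) (simp add: sample_def, intro sets_PiM_cong, auto)
  also have "\<dots> = PiM {..<n} (\<lambda>i. distr ?M borel (\<lambda>y. y i))"
  proof -
    have "PiM {..<n} (\<lambda>i. distr ?M borel (\<lambda>y. y i)) = PiM {..<n} (\<lambda>_. ?N)"
    proof (rule PiM_cong)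
      fix i assume "i \<in> {..<n}"
      then show "distr ?M borel (\<lambda>y. y i) = ?N"
        using comp[of i] by (metis distr_cong lessThan_iff sets_density sets_lborel)
    qed simp
    then show ?thesis by (simp add: sample_def)
  qed
  finally have ind: "M.indep_vars (\<lambda>_. borel) (\<lambda>i y. y i) {..<n}"
    using M.indep_vars_iff_distr_eq_PiM'[where I="{..<n}" and X="\<lambda>i y. y i" and M'="\<lambda>_. borel"] rv n by auto
  have dist: "distributed ?M lborel (\<lambda>y. y i) (normal_density \<theta> 1)" if "i < n" for i
    unfolding distributed_def
  proof (intro conjI)
    show "distr ?M lborel (\<lambda>y. y i) = density lborel (\<lambda>x. ennreal (normal_density \<theta> 1 x))"
      using comp[OF that] by (metis distr_cong sets_density sets_lborel)
    show "(\<lambda>y. y i) \<in> measurable ?M lborel"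
      using rv[of i] that by (simp add: measurable_lborel1)
  qed simp
  have "distributed ?M lborel (\<lambda>x. \<Sum>i\<in>{..<n}. x i) (normal_density (\<Sum>i\<in>{..<n}. \<theta>) (sqrt (\<Sum>i\<in>{..<n}. 1\<^sup>2)))"
    using n by (intro M.sum_indep_normal ind dist) auto
  then have s: "distributed ?M lborel (\<lambda>x. \<Sum>i<n. x i) (normal_density (real n * \<theta>) (sqrt (real n)))"
    by simp
  have "distributed ?M lborel (\<lambda>x. 0 + (1 / real n) * (\<Sum>i<n. x i))
          (normal_density (0 + (1 / real n) * (real n * \<theta>)) (\<bar>1 / real n\<bar> * sqrt (real n)))"
    using n by (intro M.normal_density_affine s) auto
  moreover have "(\<lambda>x. 0 + (1 / real n) * (\<Sum>i<n. x i)) = ybar n"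
    by (auto simp: ybar_def fun_eq_iff)
  moreover have "0 + (1 / real n) * (real n * \<theta>) = \<theta>" using n by simp
  moreover have "\<bar>1 / real n\<bar> * sqrt (real n) = 1 / sqrt (real n)"
    using n by (simp add: field_simps)
  ultimately show ?thesis by simp
qed

lemma ybar_cdf:
  assumes n: "0 < n"
  shows "measure (sample n \<theta>) {y \<in> space (sample n \<theta>). ybar n y \<le> x} = Phi (sqrt (real n) * (x - \<theta>))"
proof -
  let ?M = "sample n \<theta>"
  interpret M: prob_space ?M by (rule prob_space_sample)
  have sp: "0 < 1 / sqrt (real n)" using n by simp
  have Z: "distributed ?M lborel (\<lambda>y. (ybar n y - \<theta>) / (1 / sqrt (real n))) std_normal_density"
    using M.normal_standard_normal_convert[OF sp] ybar_distributed[OF n] by blast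
  have "{y \<in> space ?M. ybar n y \<le> x} = (\<lambda>y. (ybar n y - \<theta>) / (1 / sqrt (real n))) -` {..sqrt (real n) * (x - \<theta>)} \<inter> space ?M"
    using n by (auto simp: field_simps mult.commute)
  then have "measure ?M {y \<in> space ?M. ybar n y \<le> x} = measure (distr ?M lborel (\<lambda>y. (ybar n y - \<theta>) / (1 / sqrt (real n)))) {..sqrt (real n) * (x - \<theta>)}"
    using Z by (subst measure_distr) (auto simp: distributed_def)
  also have "\<dots> = Phi (sqrt (real n) * (x - \<theta>))"
    using Z by (simp add: distributed_def Phi_def)
  finally show ?thesis .
qed


abbreviation "SN \<equiv> density lborel (\<lambda>x. ennreal (std_normal_density x))"

lemma SN_rd: "real_distribution SN"
  unfolding real_distribution_def real_distribution_axioms_def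
  using prob_space_normal_density[of 1 0] by auto

lemma Phi_cdf: "Phi = cdf SN"
  by (auto simp: fun_eq_iff Phi_def cdf_def)

lemma SN_singleton: "measure SN {x} = 0"
proof -
  have "{x} \<in> null_sets SN"
  proof (subst null_sets_density_iff)
    have "AE y in lborel. y \<in> {x} \<longrightarrow> ennreal (std_normal_density y) = 0"
      by (rule AE_I'[of "{x}"]) (auto simp: null_sets_def)
    then show "{x} \<in> sets lborel \<and> (AE y in lborel. y \<in> {x} \<longrightarrow> ennreal (std_normal_density y) = 0)"
      by simp
  qed simp
  then show ?thesis by (simp add: measure_def null_setsD1)
qed

lemma Phi_cont: "isCont Phi x"
  unfolding Phi_cdf
  using finite_borel_measure.isCont_cdf[OF real_distribution.finite_borel_measure_M[OF SN_rd]] SN_singleton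
  by blast

lemma Phi_top: "(Phi \<longlongrightarrow> 1) at_top"
  unfolding Phi_cdf by (rule real_distribution.cdf_lim_at_top_prob[OF SN_rd])

lemma Phi_bot: "(Phi \<longlongrightarrow> 0) at_bot"
  unfolding Phi_cdf
  using finite_borel_measure.cdf_lim_at_bot[OF real_distribution.finite_borel_measure_M[OF SN_rd]] .

lemma Phi_0: "Phi 0 = 1/2"
proof -
  interpret P: prob_space SN using prob_space_normal_density[of 1 0] by auto
  have X: "distributed SN lborel (\<lambda>x. x) std_normal_density"
    unfolding distributed_def by (auto simp: distr_id2)
  have "distributed SN lborel (\<lambda>x. 0 + (-1) * x) (normal_density (0 + (-1) * 0) (\<bar>-1\<bar> * 1))"
    by (rule P.normal_density_affine[OF X]) auto
  then have d: "distr SN lborel uminus = SN"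
    by (simp add: distributed_def)
  have "measure SN {..0} = measure (distr SN lborel uminus) {..0}" by (simp add: d)
  also have "\<dots> = measure SN {0..}"
    by (subst measure_distr) (auto intro!: arg_cong[where f="measure SN"])
  also have "{0..} = {0<..} \<union> {0::real}" by auto
  also have "measure SN \<dots> = measure SN {0<..} + measure SN {0}"
    by (rule P.finite_measure_Union) auto
  finally have a: "measure SN {..0} = measure SN {0<..}" using SN_singleton by simp
  have "measure SN {..0} + measure SN {0<..} = measure SN ({..0} \<union> {0<..})"
    by (rule P.finite_measure_Union[symmetric]) auto
  also have "{..0} \<union> {0<..} = (UNIV :: real set)" by auto
  finally have "measure SN {..0} + measure SN {0<..} = 1"
    using P.prob_space by simp
  then show ?thesis using a by (simp add: Phi_def)
qed


lemma alasso_le0: "0 < \<mu> \<Longrightarrow> alasso \<mu> x \<le> 0 \<longleftrightarrow> x \<le> \<mu>"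
proof -
  assume m: "0 < \<mu>"
  show ?thesis
  proof (cases "\<bar>x\<bar> \<le> \<mu>")
    case True then show ?thesis by (auto simp: alasso_def)
  next
    case False
    then have "x > \<mu> \<or> x < -\<mu>" by auto
    then show ?thesis
    proof
      assume x: "x > \<mu>"
      then have "\<mu>\<^sup>2 / x < x" using m by (simp add: divide_less_eq power2_eq_square mult_strict_mono)
      then show ?thesis using x m by (auto simp: alasso_def)
    next
      assume x: "x < -\<mu>"
      have "\<mu> * \<mu> < (-x) * (-x)" by (rule mult_strict_mono) (use x m in auto)
      then have "\<mu>\<^sup>2 / x \<ge> x" using m x by (simp add: le_divide_eq power2_eq_square)
      then show ?thesis using x m by (auto simp: alasso_def)
    qed
  qed
qed

lemma alasso_neg: "0 < \<mu> \<Longrightarrow> alasso \<mu> x < 0 \<Longrightarrow> x \<le> -\<mu>"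
proof -
  assume m: "0 < \<mu>" and a: "alasso \<mu> x < 0"
  then have "x \<le> \<mu>" using alasso_le0[OF m, of x] by simp
  moreover have "\<not> \<bar>x\<bar> \<le> \<mu>" using a by (auto simp: alasso_def)
  ultimately show ?thesis by simp
qed

lemma ybar_meas: "0 < n \<Longrightarrow> ybar n \<in> borel_measurable (sample n \<theta>)"
  using ybar_distributed[of n \<theta>] by (simp add: distributed_def)

lemma G0:
  assumes n: "0 < n" and m: "0 < \<mu>"
  shows "G_A n \<mu> (- t * \<mu>) t = Phi (sqrt (real n) * \<mu> * (t + 1))"
proof -
  have "{y \<in> space (sample n (- t * \<mu>)). (alasso \<mu> (ybar n y) - (- t * \<mu>)) / \<mu> \<le> t}
      = {y \<in> space (sample n (- t * \<mu>)). ybar n y \<le> \<mu>}"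
  proof -
    have "(alasso \<mu> a - (- t * \<mu>)) / \<mu> \<le> t \<longleftrightarrow> a \<le> \<mu>" for a
      using m alasso_le0[OF m, of a] by (simp add: divide_le_eq algebra_simps)
    then show ?thesis by auto
  qed
  then show ?thesis
    unfolding G_A_def using ybar_cdf[OF n, of "- t * \<mu>" \<mu>] by (simp add: algebra_simps)
qed

lemma Gleft:
  assumes n: "0 < n" and m: "0 < \<mu>" and th: "\<theta> < - t * \<mu>"
  shows "G_A n \<mu> \<theta> t \<le> Phi (sqrt (real n) * (- \<mu> - \<theta>))"
proof -
  interpret M: prob_space "sample n \<theta>" by (rule prob_space_sample)
  have "{y \<in> space (sample n \<theta>). (alasso \<mu> (ybar n y) - \<theta>) / \<mu> \<le> t}
      \<subseteq> {y \<in> space (sample n \<theta>). ybar n y \<le> - \<mu>}"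
  proof safe
    fix y assume "(alasso \<mu> (ybar n y) - \<theta>) / \<mu> \<le> t"
    then have "alasso \<mu> (ybar n y) \<le> t * \<mu> + \<theta>" using m by (simp add: divide_le_eq algebra_simps)
    then have "alasso \<mu> (ybar n y) < 0" using th by simp
    then show "ybar n y \<le> - \<mu>" by (rule alasso_neg[OF m])
  qed
  moreover have "{y \<in> space (sample n \<theta>). ybar n y \<le> - \<mu>} \<in> M.events"
    using ybar_meas[OF n, of \<theta>] by measurable
  ultimately have "G_A n \<mu> \<theta> t \<le> M.prob {y \<in> space (sample n \<theta>). ybar n y \<le> - \<mu>}"
    unfolding G_A_def by (rule M.finite_measure_mono)
  then show ?thesis using ybar_cdf[OF n, of \<theta> "-\<mu>"] by simp
qed


lemma space_sample_R: "space (sample n \<theta> \<Otimes>\<^sub>M R) = space (PiM {..<n} (\<lambda>_. borel) \<Otimes>\<^sub>M R)"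
  by (rule sets_eq_imp_space_eq) (rule sets_sample_R)

lemma risk_le1:
  assumes "prob_space R" shows "risk n \<mu> \<theta> t R Gh \<epsilon> \<le> 1" "0 \<le> risk n \<mu> \<theta> t R Gh \<epsilon>"
proof -
  interpret P: prob_space "sample n \<theta> \<Otimes>\<^sub>M R"
    by (intro prob_space_pair prob_space_sample assms)
  show "risk n \<mu> \<theta> t R Gh \<epsilon> \<le> 1" "0 \<le> risk n \<mu> \<theta> t R Gh \<epsilon>"
    unfolding risk_def by auto
qed

lemma part1:
  fixes R :: "'r measure" and Gh
  assumes n: "0 < n" and m: "0 < \<mu>" and c: "\<bar>t\<bar> < c"
    and eps: "\<epsilon> < (Phi (sqrt (real n) * \<mu> * (t + 1)) - Phi (sqrt (real n) * \<mu> * (t - 1))) / 2"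
    and est: "estimator n R Gh"
  shows "maxrisk n \<mu> c t R Gh \<epsilon> \<ge> 1/2"
proof (rule ccontr)
  assume "\<not> ?thesis"
  then have S: "maxrisk n \<mu> c t R Gh \<epsilon> < 1/2" by simp
  have R: "prob_space R" and Gh: "Gh \<in> borel_measurable (PiM {..<n} (\<lambda>_. borel) \<Otimes>\<^sub>M R)"
    using est by (auto simp: estimator_def)
  define \<theta>0 where "\<theta>0 = - t * \<mu>"
  define G0 where "G0 = G_A n \<mu> \<theta>0 t"
  have G0v: "G0 = Phi (sqrt (real n) * \<mu> * (t + 1))"
    unfolding G0_def \<theta>0_def by (rule G0[OF n m])
  define E where "E = {\<omega> \<in> space (PiM {..<n} (\<lambda>_. borel) \<Otimes>\<^sub>M R). G0 - \<epsilon> \<le> Gh \<omega>}"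
  have E: "E \<in> sets (PiM {..<n} (\<lambda>_. borel) \<Otimes>\<^sub>M R)"
    unfolding E_def using Gh by measurable
  let ?Th = "{\<theta>. \<bar>\<theta>\<bar> < c * \<mu>}"
  have bdd: "bdd_above ((\<lambda>\<theta>. risk n \<mu> \<theta> t R Gh \<epsilon>) ` ?Th)"
    using risk_le1(1)[OF R] by (auto intro!: bdd_aboveI)
  have le_S: "risk n \<mu> \<theta> t R Gh \<epsilon> \<le> maxrisk n \<mu> c t R Gh \<epsilon>" if "\<theta> \<in> ?Th" for \<theta>
    unfolding maxrisk_def by (rule cSUP_upper[OF that bdd])
  have th0: "\<theta>0 \<in> ?Th"
    using c m by (auto simp: \<theta>0_def abs_mult intro!: mult_strict_right_mono)
  interpret P0: prob_space "sample n \<theta>0 \<Otimes>\<^sub>M R"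
    by (intro prob_space_pair prob_space_sample R)
  have E0: "E \<in> P0.events" using E sets_sample_R by blast
  have "space (sample n \<theta>0 \<Otimes>\<^sub>M R) - E \<subseteq>
      {\<omega> \<in> space (sample n \<theta>0 \<Otimes>\<^sub>M R). \<bar>Gh \<omega> - G_A n \<mu> \<theta>0 t\<bar> > \<epsilon>}"
    by (auto simp: E_def G0_def space_sample_R)
  moreover have "{\<omega> \<in> space (sample n \<theta>0 \<Otimes>\<^sub>M R). \<bar>Gh \<omega> - G_A n \<mu> \<theta>0 t\<bar> > \<epsilon>} \<in> P0.events"
    using Gh unfolding space_sample_R by (simp add: sets_sample_R) measurable
  ultimately have "P0.prob (space (sample n \<theta>0 \<Otimes>\<^sub>M R) - E) \<le> risk n \<mu> \<theta>0 t R Gh \<epsilon>"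
    unfolding risk_def by (rule P0.finite_measure_mono)
  then have r0: "1 - P0.prob E \<le> risk n \<mu> \<theta>0 t R Gh \<epsilon>"
    using P0.prob_compl[OF E0] by simp
  define \<theta>k where "\<theta>k = (\<lambda>k::nat. \<theta>0 - 1 / (real k + 1))"
  have lim: "\<theta>k \<longlonglongrightarrow> \<theta>0"
  proof -
    have "(\<lambda>k. inverse (real (Suc k))) \<longlonglongrightarrow> 0" by (rule LIMSEQ_inverse_real_of_nat)
    then have "(\<lambda>k. \<theta>0 - inverse (real (Suc k))) \<longlonglongrightarrow> \<theta>0 - 0" by (intro tendsto_diff tendsto_const)
    then show ?thesis by (simp add: \<theta>k_def inverse_eq_divide add.commute)
  qed
  have ev1: "eventually (\<lambda>k. \<theta>k k \<in> ?Th) sequentially"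
  proof -
    have "open ?Th" by (auto intro!: open_Collect_less continuous_intros)
    then show ?thesis using topological_tendstoD[OF lim _ th0] by blast
  qed
  have "(\<lambda>k. Phi (sqrt (real n) * (- \<mu> - \<theta>k k))) \<longlonglongrightarrow> Phi (sqrt (real n) * (- \<mu> - \<theta>0))"
    by (intro isCont_tendsto_compose[OF Phi_cont] tendsto_intros lim)
  moreover have "Phi (sqrt (real n) * (- \<mu> - \<theta>0)) < G0 - 2 * \<epsilon>"
    using eps unfolding G0v \<theta>0_def by (simp add: algebra_simps)
  ultimately have ev2: "eventually (\<lambda>k. Phi (sqrt (real n) * (- \<mu> - \<theta>k k)) < G0 - 2 * \<epsilon>) sequentially"
    by (rule order_tendstoD)
  have ev: "eventually (\<lambda>k. emeasure (sample n (\<theta>k k) \<Otimes>\<^sub>M R) E \<le> ennreal (maxrisk n \<mu> c t R Gh \<epsilon>)) sequentially"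
    using ev1 ev2
  proof eventually_elim
    case (elim k)
    interpret Pk: prob_space "sample n (\<theta>k k) \<Otimes>\<^sub>M R"
      by (intro prob_space_pair prob_space_sample R)
    have "\<theta>k k < - t * \<mu>" by (simp add: \<theta>k_def \<theta>0_def)
    then have "G_A n \<mu> (\<theta>k k) t \<le> Phi (sqrt (real n) * (- \<mu> - \<theta>k k))" by (rule Gleft[OF n m])
    then have Gk: "G_A n \<mu> (\<theta>k k) t < G0 - 2 * \<epsilon>" using elim by simp
    have "E \<subseteq> {\<omega> \<in> space (sample n (\<theta>k k) \<Otimes>\<^sub>M R). \<bar>Gh \<omega> - G_A n \<mu> (\<theta>k k) t\<bar> > \<epsilon>}"
      using Gk by (auto simp: E_def space_sample_R)
    moreover have "{\<omega> \<in> space (sample n (\<theta>k k) \<Otimes>\<^sub>M R). \<bar>Gh \<omega> - G_A n \<mu> (\<theta>k k) t\<bar> > \<epsilon>} \<in> Pk.events"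
      using Gh unfolding space_sample_R by (simp add: sets_sample_R) measurable
    ultimately have "Pk.prob E \<le> risk n \<mu> (\<theta>k k) t R Gh \<epsilon>"
      unfolding risk_def by (rule Pk.finite_measure_mono)
    also have "\<dots> \<le> maxrisk n \<mu> c t R Gh \<epsilon>" using le_S elim by blast
    finally show ?case by (simp add: Pk.emeasure_eq_measure ennreal_leI)
  qed
  have "emeasure (sample n \<theta>0 \<Otimes>\<^sub>M R) E \<le> liminf (\<lambda>k. emeasure (sample n (\<theta>k k) \<Otimes>\<^sub>M R) E)"
    by (rule sample_R_lsc[OF R E lim])
  also have "\<dots> \<le> limsup (\<lambda>k. emeasure (sample n (\<theta>k k) \<Otimes>\<^sub>M R) E)"
    by (rule Liminf_le_Limsup) simp
  also have "\<dots> \<le> ennreal (maxrisk n \<mu> c t R Gh \<epsilon>)"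
    by (rule Limsup_bounded[OF ev])
  finally have "P0.prob E \<le> maxrisk n \<mu> c t R Gh \<epsilon>"
    using le_S[OF th0] risk_le1(2)[OF R, of n \<mu> \<theta>0 t Gh \<epsilon>]
    by (simp add: P0.emeasure_eq_measure ennreal_le_iff)
  then show False using r0 le_S[OF th0] S by linarith
qed


lemma est_nonempty: "\<exists>p :: 'r measure \<times> ((nat \<Rightarrow> real) \<times> 'r \<Rightarrow> real). estimator n (fst p) (snd p)"
proof -
  have "estimator n (return (count_space UNIV) (undefined::'r)) (\<lambda>_. 0)"
    unfolding estimator_def by (auto intro!: prob_space_return)
  then show ?thesis by (intro exI[of _ "(return (count_space UNIV) (undefined::'r), \<lambda>_. 0)"]) simp
qed

lemma Jlim:
  fixes a :: "nat \<Rightarrow> real"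
  assumes a: "filterlim a at_top sequentially"
    and t: "(\<bar>t\<bar> < 1 \<and> \<epsilon> < 1/2) \<or> (\<bar>t\<bar> = 1 \<and> \<epsilon> < 1/4)"
  shows "eventually (\<lambda>n. \<epsilon> < (Phi (a n * (t + 1)) - Phi (a n * (t - 1))) / 2) sequentially"
proof -
  have top: "((\<lambda>n. Phi (a n * k)) \<longlongrightarrow> 1) sequentially" if "0 < k" for k
  proof -
    have "filterlim (\<lambda>n. k * a n) at_top sequentially"
      by (rule filterlim_tendsto_pos_mult_at_top[OF tendsto_const that a])
    then have "filterlim (\<lambda>n. a n * k) at_top sequentially" by (simp add: mult.commute)
    then show ?thesis by (rule filterlim_compose[OF Phi_top])
  qed
  have bot: "((\<lambda>n. Phi (a n * k)) \<longlongrightarrow> 0) sequentially" if "k < 0" for k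
  proof -
    have "filterlim (\<lambda>n. k * a n) at_bot sequentially"
      by (rule filterlim_tendsto_neg_mult_at_bot[OF tendsto_const that a])
    then have "filterlim (\<lambda>n. a n * k) at_bot sequentially" by (simp add: mult.commute)
    then show ?thesis by (rule filterlim_compose[OF Phi_bot])
  qed
  from t consider "\<bar>t\<bar> < 1" "\<epsilon> < 1/2" | "t = 1" "\<epsilon> < 1/4" | "t = -1" "\<epsilon> < 1/4" by linarith
  then show ?thesis
  proof cases
    case 1
    have "((\<lambda>n. (Phi (a n * (t + 1)) - Phi (a n * (t - 1))) / 2) \<longlongrightarrow> (1 - 0) / 2) sequentially"
      using 1 by (intro tendsto_intros top bot) auto
    then show ?thesis using 1 by (intro order_tendstoD) auto
  next
    case 2
    have "((\<lambda>n. (Phi (a n * (t + 1)) - Phi (a n * (t - 1))) / 2) \<longlongrightarrow> (1 - 1/2) / 2) sequentially"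
      using 2 by (intro tendsto_intros top) (auto simp: Phi_0)
    then show ?thesis using 2 by (intro order_tendstoD) auto
  next
    case 3
    have "((\<lambda>n. (Phi (a n * (t + 1)) - Phi (a n * (t - 1))) / 2) \<longlongrightarrow> (1/2 - 0) / 2) sequentially"
      using 3 by (intro tendsto_intros bot) (auto simp: Phi_0)
    then show ?thesis using 3 by (intro order_tendstoD) auto
  qed
qed


theorem theorem7:
  fixes t :: real
  shows "(\<forall>(n::nat) (\<mu>::real) (c::real) (\<epsilon>::real) (R::'r measure) Gh.
            0 < n \<longrightarrow> 0 < \<mu> \<longrightarrow> \<bar>t\<bar> < c \<longrightarrow>
            \<epsilon> < (Phi (sqrt (real n) * \<mu> * (t + 1)) - Phi (sqrt (real n) * \<mu> * (t - 1))) / 2 \<longrightarrow>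
            estimator n R Gh \<longrightarrow>
            maxrisk n \<mu> c t R Gh \<epsilon> \<ge> 1/2)
       \<and> (\<forall>(\<mu>::nat \<Rightarrow> real). (\<forall>n. 0 < \<mu> n) \<longrightarrow> \<mu> \<longlonglongrightarrow> 0 \<longrightarrow>
            filterlim (\<lambda>n. sqrt (real n) * \<mu> n) at_top sequentially \<longrightarrow>
            (\<forall>c \<epsilon>. \<bar>t\<bar> < c \<longrightarrow>
               ((\<bar>t\<bar> < 1 \<and> \<epsilon> < 1/2) \<or> (\<bar>t\<bar> = 1 \<and> \<epsilon> < 1/4)) \<longrightarrow>
               liminf (\<lambda>n. ereal (INF p \<in> {p :: 'r measure \<times> ((nat \<Rightarrow> real) \<times> 'r \<Rightarrow> real).
                                          estimator n (fst p) (snd p)}.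
                                  maxrisk n (\<mu> n) c t (fst p) (snd p) \<epsilon>)) \<ge> ereal (1/2)))"
proof (intro conjI allI impI)
  fix n :: nat and \<mu> c \<epsilon> :: real and R :: "'r measure" and Gh
  assume "0 < n" "0 < \<mu>" "\<bar>t\<bar> < c"
    "\<epsilon> < (Phi (sqrt (real n) * \<mu> * (t + 1)) - Phi (sqrt (real n) * \<mu> * (t - 1))) / 2"
    "estimator n R Gh"
  then show "maxrisk n \<mu> c t R Gh \<epsilon> \<ge> 1/2" by (rule part1)
next
  fix \<mu> :: "nat \<Rightarrow> real" and c \<epsilon> :: real
  assume pos: "\<forall>n. 0 < \<mu> n" and "\<mu> \<longlonglongrightarrow> 0"
    and a: "filterlim (\<lambda>n. sqrt (real n) * \<mu> n) at_top sequentially"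
    and c: "\<bar>t\<bar> < c" and t: "(\<bar>t\<bar> < 1 \<and> \<epsilon> < 1/2) \<or> (\<bar>t\<bar> = 1 \<and> \<epsilon> < 1/4)"
  have ev: "eventually (\<lambda>n. \<epsilon> < (Phi (sqrt (real n) * \<mu> n * (t + 1)) - Phi (sqrt (real n) * \<mu> n * (t - 1))) / 2) sequentially"
    by (rule Jlim[OF a t])
  have "eventually (\<lambda>n. ereal (1/2) \<le> ereal (INF p \<in> {p :: 'r measure \<times> ((nat \<Rightarrow> real) \<times> 'r \<Rightarrow> real).
                                          estimator n (fst p) (snd p)}.
                                  maxrisk n (\<mu> n) c t (fst p) (snd p) \<epsilon>)) sequentially"
    using ev eventually_gt_at_top[of 0]
  proof eventually_elim
    case (elim n)
    have "1/2 \<le> (INF p \<in> {p :: 'r measure \<times> ((nat \<Rightarrow> real) \<times> 'r \<Rightarrow> real).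
                                          estimator n (fst p) (snd p)}.
                                  maxrisk n (\<mu> n) c t (fst p) (snd p) \<epsilon>)"
    proof (rule cINF_greatest)
      show "{p :: 'r measure \<times> ((nat \<Rightarrow> real) \<times> 'r \<Rightarrow> real). estimator n (fst p) (snd p)} \<noteq> {}"
        using est_nonempty[of n] by auto
      fix p :: "'r measure \<times> ((nat \<Rightarrow> real) \<times> 'r \<Rightarrow> real)"
      assume "p \<in> {p. estimator n (fst p) (snd p)}"
      then show "1/2 \<le> maxrisk n (\<mu> n) c t (fst p) (snd p) \<epsilon>"
        using elim pos c by (intro part1) auto
    qed
    then show ?case by simp
  qed
  then show "liminf (\<lambda>n. ereal (INF p \<in> {p :: 'r measure \<times> ((nat \<Rightarrow> real) \<times> 'r \<Rightarrow> real).
                                          estimator n (fst p) (snd p)}.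
                                  maxrisk n (\<mu> n) c t (fst p) (snd p) \<epsilon>)) \<ge> ereal (1/2)"
    by (rule Liminf_bounded)
qed

end
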